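(* Let $d\ge1$, let $P$ be a probability distribution on $\{0,1\}^d$ with $P(\nu)>0$ for all $\nu$, fix $\omega\in\{0,1\}^d$, and let $\mathcal{Q}_\omega:=\{y\in\mathbb{R}^d\mid A_\omega y\le b_\omega\}$, where $A_\omega$ is the $(2^d-1)\times d$ matrix with rows indexed by $\nu\in\{0,1\}^d\setminus\{\omega\}$, $A_\omega(\nu,i)=1$ if $\nu_i\ne\omega_i$ and $0$ otherwise, and $b_\omega(\nu)=\ln(P(\nu)/P(\omega))$. Let $f_\omega(y):=\prod_{i=1}^d(1+e^{y_i})$ for $y\in\mathbb{R}^d$. Let $F\subseteq\mathcal{Q}_\omega$ be a face of positive dimension and let $\hat y$ be a point in the relative interior of $F$. Then $f_\omega(\hat y)<\max_{y\in\mathcal{Q}_\omega}f_\omega(y)$. More specifically: (1) if the gradient $\nabla f_\omega(\hat y)$ is not orthogonal to $F$, then there is $\hat z\in F$ with $f_\omega(\hat z)>f_\omega(\hat y)$; (2) if $\nabla f_\omega(\hat y)$ is orthogonal to $F$, then $f_\omega(\hat y)$ is a local minimum of $f_\omega$ restricted to $F$.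
   Context: A face of $\mathcal{Q}_\omega$ is a nonempty set of the form $\{y\in\mathcal{Q}_\omega\mid A'_\omega y=b'_\omega\}$, where $A'_\omega$, $b'_\omega$ are the submatrix and subvector of $A_\omega$, $b_\omega$ formed by the same set of rows; its dimension is $d-\mathrm{rank}(A'_\omega)$. "Orthogonal to $F$" means orthogonal to every direction in the affine hull of $F$ (i.e. to $\{u-v: u,v\in F\}$). *)

theory Defs
  imports "HOL-Analysis.Analysis"
begin

text \<open>Points of {0,1}^d are functions 'n => bool (d = CARD('n)); y in R^d is real^'n.\<close>

definition Arow :: "('n::finite \<Rightarrow> bool) \<Rightarrow> ('n \<Rightarrow> bool) \<Rightarrow> real^'n" where
  "Arow \<omega> \<nu> = (\<chi> i. if \<nu> i \<noteq> \<omega> i then 1 else 0)"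

definition bvec :: "(('n::finite \<Rightarrow> bool) \<Rightarrow> real) \<Rightarrow> ('n \<Rightarrow> bool) \<Rightarrow> ('n \<Rightarrow> bool) \<Rightarrow> real" where
  "bvec P \<omega> \<nu> = ln (P \<nu> / P \<omega>)"

definition Qom :: "(('n::finite \<Rightarrow> bool) \<Rightarrow> real) \<Rightarrow> ('n \<Rightarrow> bool) \<Rightarrow> (real^'n) set" where
  "Qom P \<omega> = {y. \<forall>\<nu>. \<nu> \<noteq> \<omega> \<longrightarrow> Arow \<omega> \<nu> \<bullet> y \<le> bvec P \<omega> \<nu>}"

definition fom :: "real^'n::finite \<Rightarrow> real" where
  "fom y = (\<Prod>i\<in>UNIV. 1 + exp (y $ i))"

definition is_face :: "(('n::finite \<Rightarrow> bool) \<Rightarrow> real) \<Rightarrow> ('n \<Rightarrow> bool) \<Rightarrow> (real^'n) set \<Rightarrow> bool" where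
  "is_face P \<omega> F \<longleftrightarrow> F \<noteq> {} \<and>
     (\<exists>S. S \<subseteq> {\<nu>. \<nu> \<noteq> \<omega>} \<and>
          F = {y \<in> Qom P \<omega>. \<forall>\<nu>\<in>S. Arow \<omega> \<nu> \<bullet> y = bvec P \<omega> \<nu>})"

definition face_dim :: "(('n::finite \<Rightarrow> bool) \<Rightarrow> real) \<Rightarrow> ('n \<Rightarrow> bool) \<Rightarrow> (real^'n) set \<Rightarrow> nat" where
  "face_dim P \<omega> F = CARD('n) -
     dim (Arow \<omega> ` {\<nu>. \<nu> \<noteq> \<omega> \<and> (\<forall>y\<in>F. Arow \<omega> \<nu> \<bullet> y = bvec P \<omega> \<nu>)})"

end

theory Submission
  imports Defs
begin


lemma key_ineq:
  fixes a s :: real assumes "s \<noteq> 0"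
  shows "(1 + exp a)^2 < (1 + exp (a + s)) * (1 + exp (a - s))"
proof -
  have e: "exp s + exp (-s) > 2"
  proof -
    have "(exp s - 1)^2 > 0" using assms by simp
    hence "exp s * exp s + 1 > 2 * exp s" by (simp add: power2_eq_square algebra_simps)
    hence "(exp s * exp s + 1) / exp s > 2" by (simp add: field_simps)
    thus ?thesis by (simp add: field_simps exp_minus)
  qed
  have "exp a * (exp s + exp (-s)) > exp a * 2" using e by simp
  moreover have "exp a * (exp s + exp (-s)) = exp (a+s) + exp (a-s)"
    by (simp add: distrib_left exp_add exp_diff exp_minus field_simps)
  ultimately have "exp (a+s) + exp (a-s) > 2 * exp a" by simp
  moreover have "exp (a+s) * exp (a-s) = exp a ^ 2"
    by (simp add: exp_add exp_diff power2_eq_square)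
  ultimately show ?thesis by (simp add: power2_eq_square algebra_simps)
qed

lemma fom_pos: "fom y > 0"
  unfolding fom_def by (intro prod_pos) (simp add: add_pos_pos)

lemma fom_strict:
  fixes y w :: "real^'n::finite"
  assumes "w \<noteq> 0"
  shows "fom y ^ 2 < fom (y + w) * fom (y - w)"
proof -
  obtain j where j: "w $ j \<noteq> 0" using assms by (metis vec_eq_iff zero_index)
  have "fom y ^ 2 = (\<Prod>i\<in>UNIV. (1 + exp (y $ i))^2)"
    unfolding fom_def by (simp add: prod_power_distrib)
  also have "\<dots> < (\<Prod>i\<in>UNIV. (1 + exp (y$i + w$i)) * (1 + exp (y$i - w$i)))"
  proof (rule prod_mono_strict[of j])
    show "(1 + exp (y $ j))^2 < (1 + exp (y$j + w$j)) * (1 + exp (y$j - w$j))"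
      using key_ineq[OF j] by simp
    fix i :: 'n
    show "0 \<le> (1 + exp (y $ i))^2 \<and> (1 + exp (y $ i))^2 \<le> (1 + exp (y$i + w$i)) * (1 + exp (y$i - w$i))"
      using key_ineq[of "w$i" "y$i"] by (cases "w$i = 0") (auto simp: power2_eq_square)
    show "0 < (1 + exp (y$i + w$i)) * (1 + exp (y$i - w$i))"
      by (simp add: add_pos_pos)
  qed auto
  also have "\<dots> = fom (y + w) * fom (y - w)"
    unfolding fom_def by (simp add: prod.distrib)
  finally show ?thesis .
qed

lemma fom_mono:
  fixes y z :: "real^'n::finite"
  assumes "\<And>i. y $ i \<le> z $ i"
  shows "fom y \<le> fom z"
  unfolding fom_def using assms by (intro prod_mono) (auto simp: add_pos_pos less_imp_le)

lemma fom_cont: "continuous_on S fom"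
  unfolding fom_def by (intro continuous_intros)



lemma Arow_inner: "Arow \<omega> \<nu> \<bullet> y = (\<Sum>i\<in>UNIV. if \<nu> i \<noteq> \<omega> i then y $ i else 0)"
  unfolding Arow_def inner_vec_def by (intro sum.cong) auto

lemma Arow_flip: "Arow \<omega> ((fun_upd \<omega> i (\<not> \<omega> i))) \<bullet> y = y $ i"
proof -
  have "(\<Sum>k\<in>UNIV. if (fun_upd \<omega> i (\<not> \<omega> i)) k \<noteq> \<omega> k then y $ k else 0) =
        (\<Sum>k\<in>UNIV. if k = i then y $ k else 0)"
    by (intro sum.cong) auto
  thus ?thesis unfolding Arow_inner by simp
qed

lemma max_exists:
  fixes P :: "('n::finite \<Rightarrow> bool) \<Rightarrow> real" and \<omega> :: "'n \<Rightarrow> bool"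
  assumes ne: "Qom P \<omega> \<noteq> {}"
  shows "\<exists>m\<in>Qom P \<omega>. \<forall>y\<in>Qom P \<omega>. fom y \<le> fom m"
proof -
  define B where "B = (\<Sum>\<nu>\<in>UNIV. \<bar>bvec P \<omega> \<nu>\<bar>)"
  have bB: "\<bar>bvec P \<omega> \<nu>\<bar> \<le> B" for \<nu>
    unfolding B_def by (rule member_le_sum) auto
  have B0: "B \<ge> 0" unfolding B_def by (intro sum_nonneg) auto
  define L where "L = - (real CARD('n) + 1) * B - 1"
  have LB: "L \<le> B" using B0 unfolding L_def by (simp add: algebra_simps)
  have up: "y $ i \<le> B" if "y \<in> Qom P \<omega>" for y i
  proof -
    have "(fun_upd \<omega> i (\<not> \<omega> i)) \<noteq> \<omega>" by (metis fun_upd_same)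
    hence "Arow \<omega> (fun_upd \<omega> i (\<not> \<omega> i)) \<bullet> y \<le> bvec P \<omega> ((fun_upd \<omega> i (\<not> \<omega> i)))"
      using that unfolding Qom_def by blast
    hence "y $ i \<le> bvec P \<omega> ((fun_upd \<omega> i (\<not> \<omega> i)))"
      using Arow_flip[of \<omega> i y] by simp
    thus ?thesis using bB[of "(fun_upd \<omega> i (\<not> \<omega> i))"] by simp
  qed
  define cl where "cl y = (\<chi> i. max (y $ i) L)" for y :: "real^'n"
  have cl_in: "cl y \<in> Qom P \<omega>" if y: "y \<in> Qom P \<omega>" for y
    unfolding Qom_def
  proof (intro CollectI allI impI)
    fix \<nu> :: "'n \<Rightarrow> bool" assume nu: "\<nu> \<noteq> \<omega>"
    show "Arow \<omega> \<nu> \<bullet> cl y \<le> bvec P \<omega> \<nu>"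
    proof (cases "\<forall>i. \<nu> i \<noteq> \<omega> i \<longrightarrow> L \<le> y $ i")
      case True
      hence "Arow \<omega> \<nu> \<bullet> cl y = Arow \<omega> \<nu> \<bullet> y"
        unfolding Arow_inner cl_def by (intro sum.cong) auto
      thus ?thesis using y nu unfolding Qom_def by auto
    next
      case False
      then obtain j where j: "\<nu> j \<noteq> \<omega> j" "y $ j < L" using not_le by blast
      have le: "(if \<nu> i \<noteq> \<omega> i then cl y $ i else 0) \<le> B" for i
        using up[OF y, of i] LB B0 by (auto simp: cl_def)
      have "Arow \<omega> \<nu> \<bullet> cl y = (if \<nu> j \<noteq> \<omega> j then cl y $ j else 0) +
          (\<Sum>i\<in>UNIV - {j}. if \<nu> i \<noteq> \<omega> i then cl y $ i else 0)"
        unfolding Arow_inner by (simp add: sum.remove)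
      also have "\<dots> \<le> L + (\<Sum>i\<in>UNIV - {j}. B)"
        using j by (intro add_mono sum_mono le) (auto simp: cl_def)
      also have "\<dots> \<le> L + real CARD('n) * B"
      proof -
        have "card (UNIV - {j}) \<le> CARD('n)" by (simp add: card_Diff_subset)
        hence "real (card (UNIV - {j})) * B \<le> real CARD('n) * B"
          using B0 by (intro mult_right_mono) auto
        thus ?thesis by simp
      qed
      also have "\<dots> \<le> bvec P \<omega> \<nu>" using bB[of \<nu>] unfolding L_def by (simp add: algebra_simps)
      finally show ?thesis .
    qed
  qed
  define K where "K = Qom P \<omega> \<inter> cbox (\<chi> i. L) (\<chi> i. B)"
  have clK: "cl y \<in> K" if "y \<in> Qom P \<omega>" for y
    unfolding K_def using cl_in[OF that] up[OF cl_in[OF that]]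
    by (auto simp: mem_box_cart cl_def)
  have clge: "fom y \<le> fom (cl y)" for y
    by (rule fom_mono) (simp add: cl_def)
  have "closed (Qom P \<omega>)"
  proof -
    have "Qom P \<omega> = (\<Inter>\<nu>\<in>{\<nu>. \<nu> \<noteq> \<omega>}. {y. Arow \<omega> \<nu> \<bullet> y \<le> bvec P \<omega> \<nu>})"
      unfolding Qom_def by auto
    also have "closed \<dots>"
      by (intro closed_INT ballI closed_Collect_le continuous_intros)
    finally show ?thesis .
  qed
  hence "compact K" unfolding K_def by (metis Int_commute compact_Int_closed compact_cbox)
  moreover have "K \<noteq> {}" using ne clK by blast
  ultimately obtain m where m: "m \<in> K" "\<forall>y\<in>K. fom y \<le> fom m"
    using continuous_attains_sup[of K fom] fom_cont by blast
  show ?thesis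
  proof (intro bexI ballI)
    show "m \<in> Qom P \<omega>" using m K_def by auto
    fix y assume "y \<in> Qom P \<omega>"
    thus "fom y \<le> fom m" using clge[of y] m clK by (meson order_trans)
  qed
qed



lemma face_two_points:
  fixes P :: "('n::finite \<Rightarrow> bool) \<Rightarrow> real" and \<omega> :: "'n \<Rightarrow> bool"
  assumes face: "is_face P \<omega> F" and dimpos: "face_dim P \<omega> F > 0"
  shows "\<exists>u\<in>F. \<exists>v\<in>F. u \<noteq> v"
proof (rule ccontr)
  assume "\<not> ?thesis"
  hence same: "\<And>u v. u \<in> F \<Longrightarrow> v \<in> F \<Longrightarrow> u = v" by blast
  from face obtain S where F0: "F \<noteq> {}" and S: "S \<subseteq> {\<nu>. \<nu> \<noteq> \<omega>}"
    and FS: "F = {y \<in> Qom P \<omega>. \<forall>\<nu>\<in>S. Arow \<omega> \<nu> \<bullet> y = bvec P \<omega> \<nu>}"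
    unfolding is_face_def by blast
  obtain p where pF: "p \<in> F" using F0 by blast
  have Fp: "F = {p}" using same pF by blast
  define T where "T = {\<nu>. \<nu> \<noteq> \<omega> \<and> (\<forall>y\<in>F. Arow \<omega> \<nu> \<bullet> y = bvec P \<omega> \<nu>)}"
  have "dim (Arow \<omega> ` T) < DIM(real^'n)"
    using dimpos unfolding face_dim_def T_def by simp
  then obtain x where x0: "x \<noteq> 0" and xo: "\<And>z. z \<in> span (Arow \<omega> ` T) \<Longrightarrow> orthogonal x z"
    using orthogonal_to_subspace_exists by blast
  have xT: "Arow \<omega> \<nu> \<bullet> x = 0" if "\<nu> \<in> T" for \<nu>
    using xo[of "Arow \<omega> \<nu>"] that by (simp add: span_base orthogonal_def inner_commute)
  have pQ: "p \<in> Qom P \<omega>" using pF FS by blast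
  define U where "U = (\<Inter>\<nu>\<in>{\<nu>. \<nu> \<noteq> \<omega> \<and> \<nu> \<notin> T}. {y. Arow \<omega> \<nu> \<bullet> y < bvec P \<omega> \<nu>})"
  have "open U" unfolding U_def
  proof (rule open_INT)
    show "finite {\<nu>. \<nu> \<noteq> \<omega> \<and> \<nu> \<notin> T}" by simp
    show "\<forall>\<nu>\<in>{\<nu>. \<nu> \<noteq> \<omega> \<and> \<nu> \<notin> T}. open {y::real^'n. Arow \<omega> \<nu> \<bullet> y < bvec P \<omega> \<nu>}"
      by (intro ballI open_Collect_less continuous_intros)
  qed
  moreover have "p \<in> U"
  proof -
    have "Arow \<omega> \<nu> \<bullet> p < bvec P \<omega> \<nu>" if "\<nu> \<noteq> \<omega>" "\<nu> \<notin> T" for \<nu>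
    proof -
      have "Arow \<omega> \<nu> \<bullet> p \<le> bvec P \<omega> \<nu>" using pQ that unfolding Qom_def by blast
      moreover have "Arow \<omega> \<nu> \<bullet> p \<noteq> bvec P \<omega> \<nu>" using that unfolding T_def Fp by auto
      ultimately show ?thesis by simp
    qed
    thus ?thesis unfolding U_def by blast
  qed
  ultimately obtain e where e: "e > 0" "ball p e \<subseteq> U" using open_contains_ball by blast
  define q where "q = p + (e / (2 * norm x)) *\<^sub>R x"
  have "dist p q = e / 2" using x0 e unfolding q_def dist_norm by simp
  hence qU: "q \<in> U" using e by auto
  have qT: "Arow \<omega> \<nu> \<bullet> q = Arow \<omega> \<nu> \<bullet> p" if "\<nu> \<in> T" for \<nu>
    using xT[OF that] unfolding q_def by (simp add: inner_add_right)
  have "q \<in> Qom P \<omega>" unfolding Qom_def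
  proof (intro CollectI allI impI)
    fix \<nu> :: "'n \<Rightarrow> bool" assume nu: "\<nu> \<noteq> \<omega>"
    show "Arow \<omega> \<nu> \<bullet> q \<le> bvec P \<omega> \<nu>"
    proof (cases "\<nu> \<in> T")
      case True thus ?thesis using qT pQ nu unfolding Qom_def by auto
    next
      case False thus ?thesis using qU nu unfolding U_def by auto
    qed
  qed
  moreover have "S \<subseteq> T"
  proof
    fix \<nu> assume "\<nu> \<in> S"
    moreover have "\<forall>y\<in>F. Arow \<omega> \<nu> \<bullet> y = bvec P \<omega> \<nu>"
      using \<open>\<nu> \<in> S\<close> FS by blast
    ultimately show "\<nu> \<in> T" using S unfolding T_def by blast
  qed
  hence "\<forall>\<nu>\<in>S. Arow \<omega> \<nu> \<bullet> q = bvec P \<omega> \<nu>"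
    using qT pF FS by auto
  ultimately have "q \<in> F" using FS by blast
  hence "q = p" using Fp by blast
  thus False using x0 e unfolding q_def by simp
qed



lemma sig_mono: fixes x y :: real assumes "x \<le> y"
  shows "exp x / (1 + exp x) \<le> exp y / (1 + exp y)"
proof -
  have "exp x \<le> exp y" using assms by simp
  hence "exp x * (1 + exp y) \<le> exp y * (1 + exp x)" by (simp add: algebra_simps)
  thus ?thesis by (simp add: divide_simps add_pos_pos)
qed

lemma tangent_min:
  fixes yh y g :: "real^'n::finite"
  assumes grad: "(fom has_derivative (\<lambda>h. g \<bullet> h)) (at yh)"
    and orth: "g \<bullet> (y - yh) = 0"
  shows "fom yh \<le> fom y"
proof -
  define w where "w = y - yh"
  define h where "h t = (\<Sum>i\<in>UNIV. ln (1 + exp (yh $ i + t * w $ i)))" for t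
  define h' where "h' t = (\<Sum>i\<in>UNIV. w $ i * (exp (yh $ i + t * w $ i) / (1 + exp (yh $ i + t * w $ i))))" for t
  have psi: "fom (yh + t *\<^sub>R w) = exp (h t)" for t
  proof -
    have "exp (h t) = (\<Prod>i\<in>UNIV. exp (ln (1 + exp (yh $ i + t * w $ i))))"
      unfolding h_def by (simp add: exp_sum)
    also have "\<dots> = (\<Prod>i\<in>UNIV. 1 + exp (yh $ i + t * w $ i))"
      by (intro prod.cong refl exp_ln) (simp add: add_pos_pos)
    finally show ?thesis unfolding fom_def by simp
  qed
  have hd: "(h has_real_derivative h' t) (at t)" for t
    unfolding h_def h'_def
    by (rule DERIV_sum) (auto intro!: derivative_eq_intros simp: add_pos_pos field_simps)
  have d1: "((\<lambda>t. exp (h t)) has_real_derivative exp (h 0) * h' 0) (at 0)"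
    by (auto intro!: derivative_eq_intros hd)
  have lin: "((\<lambda>t. yh + t *\<^sub>R w) has_derivative (\<lambda>t. t *\<^sub>R w)) (at 0)"
    by (auto intro!: derivative_eq_intros)
  have g0: "(fom has_derivative (\<lambda>h. g \<bullet> h)) (at (yh + 0 *\<^sub>R w))" using grad by simp
  have "((\<lambda>t. fom (yh + t *\<^sub>R w)) has_derivative (\<lambda>t. g \<bullet> (t *\<^sub>R w))) (at 0)"
    by (rule has_derivative_compose[OF lin g0])
  hence "((\<lambda>t. fom (yh + t *\<^sub>R w)) has_real_derivative g \<bullet> w) (at 0)"
  proof -
    assume that: "((\<lambda>t. fom (yh + t *\<^sub>R w)) has_derivative (\<lambda>t. g \<bullet> (t *\<^sub>R w))) (at 0)"
    have e: "(\<lambda>t. g \<bullet> (t *\<^sub>R w)) = (*) (g \<bullet> w)" by (rule ext) simp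
    show ?thesis using that unfolding has_field_derivative_def e by simp
  qed
  hence d2: "((\<lambda>t. exp (h t)) has_real_derivative g \<bullet> w) (at 0)" by (simp add: psi)
  have "exp (h 0) * h' 0 = g \<bullet> w" using DERIV_unique[OF d1 d2] .
  hence h'0: "h' 0 = 0" using orth unfolding w_def by simp
  obtain z where z: "0 < z" "z < 1" "h 1 - h 0 = (1 - 0) * h' z"
    using MVT2[of 0 1 h h'] hd by auto
  have "h' 0 \<le> h' z" unfolding h'_def
  proof (rule sum_mono)
    fix i :: 'n
    show "w $ i * (exp (yh $ i + 0 * w $ i) / (1 + exp (yh $ i + 0 * w $ i)))
        \<le> w $ i * (exp (yh $ i + z * w $ i) / (1 + exp (yh $ i + z * w $ i)))"
    proof (cases "w $ i \<ge> 0")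
      case True
      hence "yh $ i + 0 * w $ i \<le> yh $ i + z * w $ i" using z by simp
      from mult_left_mono[OF sig_mono[OF this] True] show ?thesis .
    next
      case False
      hence "yh $ i + z * w $ i \<le> yh $ i + 0 * w $ i" using z
        by (simp add: mult_nonneg_nonpos less_imp_le)
      from mult_left_mono_neg[OF sig_mono[OF this]] False show ?thesis by simp
    qed
  qed
  hence "h 0 \<le> h 1" using z h'0 by simp
  hence "exp (h 0) \<le> exp (h 1)" by simp
  thus ?thesis using psi[of 0] psi[of 1] unfolding w_def by simp
qed


lemma above_point:
  fixes F :: "(real^'n::finite) set"
  assumes yh: "yh \<in> rel_interior F" and uv: "u \<in> F" "v \<in> F" "u \<noteq> v"
  shows "\<exists>z\<in>F. fom z > fom yh"
proof -
  obtain e where e: "e > 0" "ball yh e \<inter> affine hull F \<subseteq> F" and yF: "yh \<in> F"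
    using yh mem_rel_interior_ball by blast
  define w0 where "w0 = u - v"
  have w00: "w0 \<noteq> 0" using uv unfolding w0_def by simp
  define t where "t = e / (2 * norm w0)"
  define w where "w = t *\<^sub>R w0"
  have t0: "t > 0" using e w00 unfolding t_def by simp
  have w0': "w \<noteq> 0" using t0 w00 unfolding w_def by simp
  have nw: "norm w = e / 2" using w00 e unfolding w_def t_def by simp
  have a1: "yh + w \<in> affine hull F" unfolding w_def w0_def
    by (rule mem_affine_3_minus) (auto intro: hull_inc yF uv affine_affine_hull)
  have a2: "yh - w \<in> affine hull F" unfolding w_def w0_def
    by (rule mem_affine_3_minus2) (auto intro: hull_inc yF uv affine_affine_hull)
  have "dist yh (yh + w) < e" "dist yh (yh - w) < e" using nw e by (auto simp: dist_norm)
  hence p1: "yh + w \<in> F" and p2: "yh - w \<in> F" using a1 a2 e by auto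
  have st: "fom yh ^ 2 < fom (yh + w) * fom (yh - w)" by (rule fom_strict[OF w0'])
  show ?thesis
  proof (rule ccontr)
    assume "\<not> ?thesis"
    hence "fom (yh + w) \<le> fom yh" "fom (yh - w) \<le> fom yh" using p1 p2 by auto
    hence "fom (yh + w) * fom (yh - w) \<le> fom yh * fom yh"
      by (intro mult_mono) (auto simp: less_imp_le fom_pos)
    thus False using st by (simp add: power2_eq_square)
  qed
qed

theorem lemma5:
  fixes P :: "('n::finite \<Rightarrow> bool) \<Rightarrow> real"
    and \<omega> :: "'n \<Rightarrow> bool"
    and F :: "(real^'n) set"
    and yh g :: "real^'n"
  assumes Ppos: "\<And>\<nu>. P \<nu> > 0"
    and Psum: "(\<Sum>\<nu>\<in>UNIV. P \<nu>) = 1"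
    and face: "is_face P \<omega> F"
    and dimpos: "face_dim P \<omega> F > 0"
    and yh: "yh \<in> rel_interior F"
    and grad: "(fom has_derivative (\<lambda>h. g \<bullet> h)) (at yh)"
  shows "(\<exists>m\<in>Qom P \<omega>. (\<forall>y\<in>Qom P \<omega>. fom y \<le> fom m) \<and> fom yh < fom m)
       \<and> ((\<exists>u\<in>F. \<exists>v\<in>F. g \<bullet> (u - v) \<noteq> 0) \<longrightarrow> (\<exists>z\<in>F. fom z > fom yh))
       \<and> ((\<forall>u\<in>F. \<forall>v\<in>F. g \<bullet> (u - v) = 0) \<longrightarrow>
            (\<exists>e>0. \<forall>y\<in>F. dist y yh < e \<longrightarrow> fom yh \<le> fom y))"
proof (intro conjI impI)
  have FQ: "F \<subseteq> Qom P \<omega>" using face unfolding is_face_def by blast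
  have yF: "yh \<in> F" using yh rel_interior_subset by blast
  obtain u v where uv: "u \<in> F" "v \<in> F" "u \<noteq> v" using face_two_points[OF face dimpos] by blast
  obtain z where z: "z \<in> F" "fom z > fom yh" using above_point[OF yh uv] by blast
  obtain m where m: "m \<in> Qom P \<omega>" "\<forall>y\<in>Qom P \<omega>. fom y \<le> fom m"
    using max_exists[of P \<omega>] FQ yF by blast
  show "\<exists>m\<in>Qom P \<omega>. (\<forall>y\<in>Qom P \<omega>. fom y \<le> fom m) \<and> fom yh < fom m"
    using m z FQ by (meson less_le_trans subsetD)
  show "\<exists>z\<in>F. fom z > fom yh" using z by blast
next
  assume o: "\<forall>u\<in>F. \<forall>v\<in>F. g \<bullet> (u - v) = 0"
  have yF: "yh \<in> F" using yh rel_interior_subset by blast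
  show "\<exists>e>0. \<forall>y\<in>F. dist y yh < e \<longrightarrow> fom yh \<le> fom y"
    using o yF tangent_min[OF grad] by (intro exI[of _ 1]) auto
qed

end
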